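(* Let $q$ be a power of $2$. In $\mathrm{AG}(3,q^2)\subset\mathrm{PG}(3,q^2)$, with affine coordinates $x,y,z$, homogeneous coordinates $J,X,Y,Z$ and plane at infinity $\Sigma_\infty: J=0$, let $\mathcal H$ be the Hermitian surface with affine equation $z^q+z=x^{q+1}+y^{q+1}$ and let $\mathcal Q$ be an irreducible quadric with affine equation $z=ax^2+by^2+cxy+dx+ey+f$, where $a,b,c,d,e,f\in\mathrm{GF}(q^2)$. Let $\mathcal C_\infty=\mathcal Q\cap\mathcal H\cap\Sigma_\infty$. If $\mathcal Q$ is a quadratic cone, then $\mathcal C_\infty$ consists either of $1$ point or of $q^2+1$ points on a line. If $\mathcal Q$ is a hyperbolic quadric, then $\mathcal C_\infty$ consists either of $1$ point, or of $q^2+1$ points on a line, or of $2q^2+1$ points on two lines. All these cases actually occur.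
   Context: Here $P_\infty=(0,0,0,1)$ lies on both $\mathcal H$ and $\mathcal Q$, and $\Sigma_\infty$ is the common tangent plane of $\mathcal H$ and $\mathcal Q$ at $P_\infty$. A quadratic cone is the quadric projecting an irreducible conic in a plane from a vertex not on that plane. *)

theory Defs
  imports "HOL-Analysis.Analysis"
begin

text \<open>Homogeneous coordinates of PG(3,F) are vectors in F^4, indexed by the
  numeral type 4; component 0 is J, 1 is X, 2 is Y, 3 is Z.
  Affine points: x = X/J, y = Y/J, z = Z/J; plane at infinity J = 0.\<close>

definition proj :: "'a::field ^ 'n \<Rightarrow> ('a ^ 'n) set" where
  "proj v = {k *s v | k. k \<noteq> 0}"

text \<open>Set of projective points whose homogeneous coordinates satisfy P
  (P is meant to be homogeneous, i.e. invariant under nonzero scaling).\<close>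
definition pts :: "('a::field ^ 4 \<Rightarrow> bool) \<Rightarrow> ('a ^ 4) set set" where
  "pts P = {proj v | v. v \<noteq> 0 \<and> P v}"

definition join :: "'a::field ^ 4 \<Rightarrow> 'a ^ 4 \<Rightarrow> ('a ^ 4) set set" where
  "join u w = {proj (s *s u + t *s w) | s t. (s, t) \<noteq> (0, 0)}"

definition is_line :: "('a::field ^ 4) set set \<Rightarrow> bool" where
  "is_line L \<longleftrightarrow> (\<exists>u w. (\<forall>s t. s *s u + t *s w = 0 \<longrightarrow> s = 0 \<and> t = 0) \<and> L = join u w)"

text \<open>A plane of PG(3,F) is the image
  of PG(2,F) under an injective linear map L : F^3 \<rightarrow> F^4, and every irreducible
  conic of that plane is, in suitable coordinates of the plane, u0 u1 = u2^2.\<close>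
definition is_quadratic_cone :: "('a::field ^ 4) set set \<Rightarrow> bool" where
  "is_quadratic_cone S \<longleftrightarrow>
     (\<exists>(L :: 'a ^ 3 ^ 4) V. inj (\<lambda>u. L *v u) \<and> (\<forall>u. L *v u \<noteq> V) \<and>
        S = \<Union> {join V (L *v u) | u. u \<noteq> 0 \<and> u $ 0 * u $ 1 = (u $ 2) ^ 2})"

definition is_hyperbolic_quadric :: "('a::field ^ 4) set set \<Rightarrow> bool" where
  "is_hyperbolic_quadric S \<longleftrightarrow>
     (\<exists>M :: 'a ^ 4 ^ 4. det M \<noteq> 0 \<and>
        S = {proj (M *v v) | v. v \<noteq> 0 \<and> v $ 0 * v $ 1 + v $ 2 * v $ 3 = 0})"

definition Qform :: "'a::field \<Rightarrow> 'a \<Rightarrow> 'a \<Rightarrow> 'a \<Rightarrow> 'a \<Rightarrow> 'a \<Rightarrow> 'a ^ 4 \<Rightarrow> 'a" where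
  "Qform a b c d e f v =
     a * (v$1)^2 + b * (v$2)^2 + c * v$1 * v$2 + d * v$1 * v$0 + e * v$2 * v$0
     + f * (v$0)^2 - v$3 * v$0"

text \<open>Coefficients of the quadratic form Qform: K i i is the coefficient of V_i^2,
  K i j (i \<noteq> j, symmetric) is the coefficient of V_i V_j.\<close>
definition Qcoef :: "'a::field \<Rightarrow> 'a \<Rightarrow> 'a \<Rightarrow> 'a \<Rightarrow> 'a \<Rightarrow> 'a \<Rightarrow> 4 \<Rightarrow> 4 \<Rightarrow> 'a" where
  "Qcoef a b c d e f i j =
     (if {i, j} = {0} then f else if {i, j} = {1} then a else if {i, j} = {2} then b
      else if {i, j} = {0, 1} then d else if {i, j} = {0, 2} then e
      else if {i, j} = {1, 2} then c else if {i, j} = {0, 3} then -1 else 0)"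

text \<open>A quadratic form with coefficients K is irreducible over F iff it is not the
  product of two linear forms with coefficients in F (comparison of coefficients).\<close>
definition irreducible_qform :: "(4 \<Rightarrow> 4 \<Rightarrow> 'a::field) \<Rightarrow> bool" where
  "irreducible_qform K \<longleftrightarrow>
     \<not> (\<exists>l m :: 'a ^ 4. \<forall>i j. K i j = (if i = j then l$i * m$i else l$i * m$j + l$j * m$i))"

definition Hform :: "nat \<Rightarrow> 'a::field ^ 4 \<Rightarrow> 'a" where
  "Hform q v = (v$3)^q * v$0 + v$3 * (v$0)^q - (v$1)^(q+1) - (v$2)^(q+1)"

definition C_infty :: "nat \<Rightarrow> 'a::field \<Rightarrow> 'a \<Rightarrow> 'a \<Rightarrow> 'a \<Rightarrow> 'a \<Rightarrow> 'a \<Rightarrow> ('a ^ 4) set set" where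
  "C_infty q a b c d e f =
     pts (\<lambda>v. v$0 = 0 \<and> Qform a b c d e f v = 0 \<and> Hform q v = 0)"

end

theory Submission
  imports Defs "HOL-Computational_Algebra.Polynomial"
begin


definition v4 :: "'a \<Rightarrow> 'a \<Rightarrow> 'a \<Rightarrow> 'a \<Rightarrow> 'a^4" where
  "v4 j x y z = (\<chi> i. if i = 0 then j else if i = 1 then x else if i = 2 then y else z)"

lemma v4_comp [simp]: "v4 j x y z $ 0 = j" "v4 j x y z $ 1 = x" "v4 j x y z $ 2 = y" "v4 j x y z $ 3 = z"
  by (simp_all add: v4_def)

lemma four0: "(4::4) = 0" by simp

lemma forall4: "(\<forall>i::4. P i) \<longleftrightarrow> P 0 \<and> P 1 \<and> P 2 \<and> P 3"
  using forall_4[of P] four0 by auto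

lemma vec4_eq: "(u::'a^4) = v \<longleftrightarrow> u$0 = v$0 \<and> u$1 = v$1 \<and> u$2 = v$2 \<and> u$3 = v$3"
  by (simp add: vec_eq_iff forall4)

lemma Qform_scale: "Qform a b c d e f (k *s v) = k^2 * Qform a b c d e f v"
  by (simp add: Qform_def power2_eq_square algebra_simps)

lemma Hform_scale: "Hform q (k *s v) = k^(q+1) * Hform q v"
  by (simp add: Hform_def power_mult_distrib algebra_simps)

lemma proj_self: "v \<in> proj v"
  unfolding proj_def by (auto intro!: exI[where x=1])

lemma proj_eqD: "proj u = proj v \<Longrightarrow> \<exists>k. k \<noteq> 0 \<and> u = k *s v"
  using proj_self[of u] by (auto simp: proj_def)

lemma proj_scale: assumes "(k::'a::field) \<noteq> 0" shows "proj (k *s v) = proj v"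
proof (rule set_eqI)
  fix x
  show "x \<in> proj (k *s v) \<longleftrightarrow> x \<in> proj v"
  proof
    assume "x \<in> proj (k *s v)"
    then obtain m where m: "m \<noteq> 0" "x = m *s (k *s v)" unfolding proj_def by blast
    hence "x = (m * k) *s v" by (simp add: vector_smult_assoc)
    moreover have "m * k \<noteq> 0" using m assms by simp
    ultimately show "x \<in> proj v" unfolding proj_def by blast
  next
    assume "x \<in> proj v"
    then obtain m where m: "m \<noteq> 0" "x = m *s v" unfolding proj_def by blast
    hence "x = (m / k) *s (k *s v)" using assms by (simp add: vector_smult_assoc)
    moreover have "m / k \<noteq> 0" using m assms by simp
    ultimately show "x \<in> proj (k *s v)" unfolding proj_def by blast
  qed
qed

lemma pts_memD:
  assumes "proj w \<in> pts P" "\<And>k v. k \<noteq> 0 \<Longrightarrow> P (k *s v) = P v"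
  shows "P w"
proof -
  obtain v where v: "proj w = proj v" "v \<noteq> 0" "P v" using assms(1) unfolding pts_def by auto
  then obtain k where "k \<noteq> 0" "w = k *s v" using proj_eqD by blast
  thus ?thesis using assms(2) v by simp
qed

lemma Qform_v4: "Qform a b c d e f (v4 0 t 1 z) = a*t^2 + c*t + b"
  by (simp add: Qform_def algebra_simps)

lemma Hform_v4: "q > 0 \<Longrightarrow> Hform q (v4 0 t 1 z) = - (t^(q+1) + 1)"
  by (simp add: Hform_def algebra_simps)

lemma C_struct:
  fixes a b c d e f :: "'a::field"
  assumes "q > 0"
  shows "C_infty q a b c d e f = insert (proj (v4 0 0 0 1))
     ((\<lambda>(t,z). proj (v4 0 t 1 z)) ` ({t. a*t^2 + c*t + b = 0 \<and> t^(q+1) + 1 = 0} \<times> UNIV))"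
  (is "?C = ?R")
proof
  show "?C \<subseteq> ?R"
  proof
    fix x assume "x \<in> ?C"
    then obtain v where x: "x = proj v" and v: "v \<noteq> 0" "v$0 = 0" "Qform a b c d e f v = 0" "Hform q v = 0"
      by (auto simp: C_infty_def pts_def)
    show "x \<in> ?R"
    proof (cases "v$2 = 0")
      case True
      from v(4) have v1: "v$1 = 0" using v(2) True assms by (simp add: Hform_def zero_power)
      define k where "k = v$3"
      have vv: "v = k *s v4 0 0 0 1" using v(2) v1 True by (simp add: vec4_eq k_def)
      have "k \<noteq> 0" using v(1) True v(2) v1 by (auto simp: vec4_eq k_def)
      hence "x = proj (v4 0 0 0 1)" using x vv proj_scale by simp
      thus ?thesis by simp
    next
      case False
      define k where "k = v$2"
      define t z where "t = v$1 / k" and "z = v$3 / k"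
      have k0: "k \<noteq> 0" using False k_def by simp
      have vv: "v = k *s v4 0 t 1 z" using False v(2) by (simp add: vec4_eq t_def z_def k_def)
      have "k^2 * Qform a b c d e f (v4 0 t 1 z) = 0" using v(3) vv by (simp add: Qform_scale)
      hence q1: "a*t^2 + c*t + b = 0" using k0 by (simp add: Qform_v4)
      have "k^(q+1) * Hform q (v4 0 t 1 z) = 0" using v(4) vv by (simp add: Hform_scale)
      hence h0: "Hform q (v4 0 t 1 z) = 0" using k0 by simp
      have q2: "t^(q+1) + 1 = 0" using h0 Hform_v4[OF assms, of t z] by (simp only: neg_equal_0_iff_equal)
      have "x = proj (v4 0 t 1 z)" using x vv proj_scale k0 by simp
      thus ?thesis using q1 q2 by auto
    qed
  qed
next
  show "?R \<subseteq> ?C"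
  proof
    fix x assume "x \<in> ?R"
    then consider "x = proj (v4 0 0 0 1)"
      | t z where "x = proj (v4 0 t 1 z)" "a*t^2 + c*t + b = 0" "t^(q+1) + 1 = 0" by auto
    then show "x \<in> ?C"
    proof cases
      case 1
      have "v4 0 0 0 (1::'a) \<noteq> 0" by (simp add: vec4_eq)
      moreover have "Qform a b c d e f (v4 0 0 0 1) = 0" by (simp add: Qform_def)
      moreover have "Hform q (v4 0 0 0 (1::'a)) = 0" using assms by (simp add: Hform_def)
      ultimately have "\<exists>w. x = proj w \<and> w \<noteq> 0 \<and> (w$0 = 0 \<and> Qform a b c d e f w = 0 \<and> Hform q w = 0)"
        using 1 by (intro exI[of _ "v4 0 0 0 1"]) simp
      thus ?thesis unfolding C_infty_def pts_def by blast
    next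
      case (2 t z)
      have "v4 0 t 1 z \<noteq> 0" by (simp add: vec4_eq)
      hence "\<exists>w. x = proj w \<and> w \<noteq> 0 \<and> (w$0 = 0 \<and> Qform a b c d e f w = 0 \<and> Hform q w = 0)"
        using 2 assms by (intro exI[of _ "v4 0 t 1 z"]) (simp add: Qform_v4 Hform_v4)
      thus ?thesis unfolding C_infty_def pts_def by blast
    qed
  qed
qed


lemma C_card:
  fixes a b c d e f :: "'a::field"
  assumes "q > 0" "finite (UNIV :: 'a set)"
  shows "card (C_infty q a b c d e f) = 1 + card {t. a*t^2 + c*t + b = 0 \<and> t^(q+1) + 1 = 0} * CARD('a)"
proof -
  let ?T = "{t. a*t^2 + c*t + b = 0 \<and> t^(q+1) + 1 = 0}"
  let ?g = "\<lambda>(t::'a,z::'a). proj (v4 0 t 1 z)"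
  have inj: "inj_on ?g (?T \<times> UNIV)"
  proof (rule inj_onI, clarify)
    fix t z t' z' :: 'a
    assume "proj (v4 0 t 1 z) = proj (v4 0 t' 1 z')"
    then obtain k where k: "k \<noteq> 0" "v4 0 t 1 z = k *s v4 0 t' 1 z'" using proj_eqD by blast
    hence "k = 1" by (simp add: vec4_eq)
    thus "t = t' \<and> z = z'" using k by (simp add: vec4_eq)
  qed
  have nin: "proj (v4 0 0 0 1) \<notin> ?g ` (?T \<times> UNIV)"
  proof
    assume "proj (v4 0 0 0 1) \<in> ?g ` (?T \<times> UNIV)"
    then obtain t z where "proj (v4 0 0 0 (1::'a)) = proj (v4 0 t 1 z)" by auto
    then obtain k where k: "k \<noteq> 0" "v4 0 0 0 (1::'a) = k *s v4 0 t 1 z" using proj_eqD by blast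
    thus False by (simp add: vec4_eq)
  qed
  have fT: "finite ?T" by (rule finite_subset[OF subset_UNIV assms(2)])
  have fin: "finite (?g ` (?T \<times> UNIV))" using fT assms(2) by simp
  have "card (C_infty q a b c d e f) = 1 + card (?g ` (?T \<times> UNIV))"
    using C_struct[OF assms(1), of a b c d e f] nin fin by simp
  also have "\<dots> = 1 + card (?T \<times> (UNIV :: 'a set))" using card_image[OF inj] by simp
  also have "\<dots> = 1 + card ?T * CARD('a)" by (simp add: card_cartesian_product)
  finally show ?thesis .
qed

definition lineT :: "'a::field \<Rightarrow> ('a^4) set set" where
  "lineT t = join (v4 0 0 0 1) (v4 0 t 1 0)"

lemma lineT_is_line: "is_line (lineT t)"
proof -
  have "\<forall>s r. s *s v4 0 0 0 1 + r *s v4 0 t 1 0 = 0 \<longrightarrow> s = 0 \<and> r = 0" by (simp add: vec4_eq)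
  thus ?thesis unfolding is_line_def lineT_def by blast
qed

lemma in_lineT: "proj (v4 0 0 0 1) \<in> lineT t" "proj (v4 0 t 1 z) \<in> lineT t"
proof -
  have "v4 0 0 0 1 = 1 *s v4 0 0 0 1 + 0 *s v4 0 t 1 (0::'a)" by (simp add: vec4_eq)
  hence "\<exists>s r. proj (v4 0 0 0 1) = proj (s *s v4 0 0 0 1 + r *s v4 0 t 1 0) \<and> (s, r) \<noteq> (0, 0)"
    by (intro exI[of _ 1] exI[of _ 0]) simp
  thus "proj (v4 0 0 0 1) \<in> lineT t" unfolding lineT_def join_def by blast
  have "v4 0 t 1 z = z *s v4 0 0 0 1 + 1 *s v4 0 t 1 (0::'a)" by (simp add: vec4_eq)
  hence "\<exists>s r. proj (v4 0 t 1 z) = proj (s *s v4 0 0 0 1 + r *s v4 0 t 1 0) \<and> (s, r) \<noteq> (0, 0)"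
    by (intro exI[of _ z] exI[of _ 1]) simp
  thus "proj (v4 0 t 1 z) \<in> lineT t" unfolding lineT_def join_def by blast
qed

lemma three_roots:
  fixes a b c :: "'a::field"
  assumes "a*t1^2 + c*t1 + b = 0" "a*t2^2 + c*t2 + b = 0" "a*t3^2 + c*t3 + b = 0"
    and "t1 \<noteq> t2" "t1 \<noteq> t3" "t2 \<noteq> t3"
  shows "a = 0 \<and> b = 0 \<and> c = 0"
proof -
  have e: "(x-y)*(a*(x+y)+c) = (a*x^2+c*x+b) - (a*y^2+c*y+b)" for x y
    by (simp add: algebra_simps power2_eq_square)
  have 1: "a*(t1+t2)+c = 0" using e[of t1 t2] assms by simp
  have 2: "a*(t1+t3)+c = 0" using e[of t1 t3] assms by simp
  have "a*(t2-t3) = (a*(t1+t2)+c) - (a*(t1+t3)+c)" by (simp add: algebra_simps)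
  hence "a*(t2-t3) = 0" using 1 2 by simp
  hence a: "a = 0" using assms by simp
  hence "c = 0" using 1 by simp
  thus ?thesis using a assms(1) by simp
qed

lemma roots_cases:
  fixes a b c :: "'a::field"
  assumes "\<not> (a = 0 \<and> b = 0 \<and> c = 0)" "T \<subseteq> {t. a*t^2 + c*t + b = 0}"
  shows "T = {} \<or> (\<exists>t. T = {t}) \<or> (\<exists>t1 t2. t1 \<noteq> t2 \<and> T = {t1, t2})"
proof (cases "T = {}")
  case False
  then obtain t1 where t1: "t1 \<in> T" by auto
  show ?thesis
  proof (cases "T \<subseteq> {t1}")
    case True thus ?thesis using t1 by blast
  next
    case False
    then obtain t2 where t2: "t2 \<in> T" "t2 \<noteq> t1" by auto
    have "T \<subseteq> {t1, t2}"
    proof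
      fix t3 assume "t3 \<in> T"
      show "t3 \<in> {t1, t2}"
      proof (rule ccontr)
        assume "t3 \<notin> {t1, t2}"
        hence "t3 \<noteq> t1" "t3 \<noteq> t2" by auto
        moreover have "a*t1^2 + c*t1 + b = 0" "a*t2^2 + c*t2 + b = 0" "a*t3^2 + c*t3 + b = 0"
          using assms(2) t1 t2(1) \<open>t3 \<in> T\<close> by blast+
        ultimately have "a = 0 \<and> b = 0 \<and> c = 0" using three_roots[of a t1 c b t2 t3] t2(2) by metis
        thus False using assms(1) by blast
      qed
    qed
    thus ?thesis using t1 t2 by blast
  qed
qed simp

lemma char2:
  assumes "finite (UNIV :: 'a::field set)" "CARD('a) = 2 ^ n" "n \<ge> 1"
  shows "(2::'a) = 0"
proof -
  have inj: "inj (\<lambda>x::'a. x + 1)" by (rule injI) simp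
  have surj: "range (\<lambda>x::'a. x + 1) = UNIV"
  proof -
    have "x = (x - 1) + 1" for x :: 'a by simp
    thus ?thesis by blast
  qed
  have "sum id (UNIV :: 'a set) = sum id (range (\<lambda>x::'a. x + 1))" using surj by simp
  also have "\<dots> = sum (\<lambda>x. x + 1) (UNIV :: 'a set)" using sum.reindex[OF inj, of id] by simp
  also have "\<dots> = sum id UNIV + of_nat (CARD('a))" by (simp add: sum.distrib)
  finally have "of_nat (CARD('a)) = (0::'a)" by simp
  hence "(2::'a) ^ n = 0" using assms(2) by simp
  thus ?thesis by simp
qed

lemma Qcoef_vals:
  "Qcoef a b c d e f 0 0 = f" "Qcoef a b c d e f 1 1 = a" "Qcoef a b c d e f 2 2 = b"
  "Qcoef a b c d e f 3 3 = 0" "Qcoef a b c d e f 0 1 = d" "Qcoef a b c d e f 1 0 = d"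
  "Qcoef a b c d e f 0 2 = e" "Qcoef a b c d e f 2 0 = e" "Qcoef a b c d e f 0 3 = -1"
  "Qcoef a b c d e f 3 0 = -1" "Qcoef a b c d e f 1 2 = c" "Qcoef a b c d e f 2 1 = c"
  "Qcoef a b c d e f 1 3 = 0" "Qcoef a b c d e f 3 1 = 0" "Qcoef a b c d e f 2 3 = 0"
  "Qcoef a b c d e f 3 2 = 0"
  by (simp_all add: Qcoef_def doubleton_eq_iff)

lemma irred_iff:
  fixes a b c d e f :: "'a::field"
  shows "irreducible_qform (Qcoef a b c d e f) \<longleftrightarrow> \<not> (a = 0 \<and> b = 0 \<and> c = 0)"
proof
  assume irr: "irreducible_qform (Qcoef a b c d e f)"
  show "\<not> (a = 0 \<and> b = 0 \<and> c = 0)"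
  proof
    assume abc: "a = 0 \<and> b = 0 \<and> c = 0"
    let ?l = "v4 1 0 0 0 :: 'a^4" and ?m = "v4 f d e (-1) :: 'a^4"
    have "\<forall>i j. Qcoef a b c d e f i j = (if i = j then ?l$i * ?m$i else ?l$i * ?m$j + ?l$j * ?m$i)"
      using abc by (simp add: forall4 Qcoef_vals)
    thus False using irr unfolding irreducible_qform_def by blast
  qed
next
  assume abc: "\<not> (a = 0 \<and> b = 0 \<and> c = 0)"
  show "irreducible_qform (Qcoef a b c d e f)"
    unfolding irreducible_qform_def
  proof
    assume "\<exists>l m :: 'a^4. \<forall>i j. Qcoef a b c d e f i j = (if i = j then l$i * m$i else l$i * m$j + l$j * m$i)"
    then obtain l m :: "'a^4" where lm: "\<And>i j. Qcoef a b c d e f i j = (if i = j then l$i * m$i else l$i * m$j + l$j * m$i)"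
      by blast
    have e33: "l$3 * m$3 = 0" using lm[of 3 3] by (simp add: Qcoef_vals)
    have e03: "l$0 * m$3 + l$3 * m$0 = -1" using lm[of 0 3] by (simp add: Qcoef_vals)
    have e13: "l$1 * m$3 + l$3 * m$1 = 0" using lm[of 1 3] by (simp add: Qcoef_vals)
    have e23: "l$2 * m$3 + l$3 * m$2 = 0" using lm[of 2 3] by (simp add: Qcoef_vals)
    have e11: "a = l$1 * m$1" using lm[of 1 1] by (simp add: Qcoef_vals)
    have e22: "b = l$2 * m$2" using lm[of 2 2] by (simp add: Qcoef_vals)
    have e12: "c = l$1 * m$2 + l$2 * m$1" using lm[of 1 2] by (simp add: Qcoef_vals)
    show False
    proof (cases "l$3 = 0")
      case True
      hence "m$3 \<noteq> 0" using e03 by auto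
      hence "l$1 = 0" "l$2 = 0" using e13 e23 True by auto
      thus False using abc e11 e22 e12 by simp
    next
      case False
      hence "m$3 = 0" using e33 by simp
      hence "m$1 = 0" "m$2 = 0" using e13 e23 False by auto
      thus False using abc e11 e22 e12 by simp
    qed
  qed
qed

lemma Qform_zero [simp]: "Qform a b c d e f 0 = 0"
  by (simp add: Qform_def)

lemma Qform_expand:
  assumes "V$0 = 0"
  shows "Qform a b c d e f (V + v4 1 x y z) = Qform a b c d e f V + Qform a b c d e f (v4 1 x y z)
     + (x*(2*a*V$1 + c*V$2) + y*(2*b*V$2 + c*V$1) + d*V$1 + e*V$2 - V$3)"
  using assms by (simp add: Qform_def algebra_simps power2_eq_square)

lemma Qform_e3: "Qform a b c d e f (V + v4 0 0 0 1) = Qform a b c d e f V - V$0"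
  by (simp add: Qform_def algebra_simps power2_eq_square)

lemma cone_c0:
  fixes a b c d e f :: "'a::field"
  assumes cone: "is_quadratic_cone (pts (\<lambda>v. Qform a b c d e f v = 0))" and two: "(2::'a) = 0"
  shows "c = 0"
proof (rule ccontr)
  assume c0: "c \<noteq> 0"
  let ?Q = "Qform a b c d e f"
  let ?S = "pts (\<lambda>v. Qform a b c d e f v = 0)"
  have hom: "\<And>k v. k \<noteq> 0 \<Longrightarrow> (?Q (k *s v) = 0) = (?Q v = 0)" by (simp add: Qform_scale)
  obtain L :: "'a^3^4" and V where Lne: "\<forall>u. L *v u \<noteq> V"
    and S: "?S = \<Union> {join V (L *v u) | u. u \<noteq> 0 \<and> u $ 0 * u $ 1 = (u $ 2) ^ 2}"
    using cone unfolding is_quadratic_cone_def by blast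
  have V0: "V \<noteq> 0" using Lne[rule_format, of 0] by simp
  define u0 :: "'a^3" where "u0 = (\<chi> i. if i = 0 then 1 else 0)"
  have u0: "u0 \<noteq> 0 \<and> u0 $ 0 * u0 $ 1 = (u0 $ 2) ^ 2" by (simp add: u0_def vec_eq_iff exI[of _ 0])
  have sub: "join V (L *v u) \<subseteq> ?S" if "u \<noteq> 0" "u $ 0 * u $ 1 = (u $ 2) ^ 2" for u
    using that S by blast
  have inJ: "proj (s *s V + t *s (L *v u)) \<in> join V (L *v u)" if "(s, t) \<noteq> (0, 0)" for s t u
    using that unfolding join_def by blast
  have QV: "?Q V = 0"
  proof -
    have "proj (1 *s V + 0 *s (L *v u0)) \<in> ?S" using sub[of u0] u0 inJ[of 1 0 u0] by auto
    hence "proj V \<in> ?S" by simp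
    thus ?thesis using pts_memD[of V "\<lambda>v. ?Q v = 0"] hom by blast
  qed
  have key: "?Q (V + w) = 0" if "?Q w = 0" for w
  proof (cases "w = 0")
    case True thus ?thesis using QV by simp
  next
    case False
    hence "proj w \<in> ?S" using that unfolding pts_def by blast
    then obtain u where u: "u \<noteq> 0" "u $ 0 * u $ 1 = (u $ 2) ^ 2" and pw: "proj w \<in> join V (L *v u)"
      using S by blast
    then obtain s t where st: "proj w = proj (s *s V + t *s (L *v u))" "(s, t) \<noteq> (0, 0)"
      unfolding join_def by blast
    then obtain k where k: "w = k *s (s *s V + t *s (L *v u))" using proj_eqD by blast
    have eq: "V + w = (1 + k * s) *s V + (k * t) *s (L *v u)"
      using k by (simp add: algebra_simps vector_smult_assoc vector_add_ldistrib scaleR_add_left)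
    show ?thesis
    proof (cases "V + w = 0")
      case True thus ?thesis by simp
    next
      case False
      have "(1 + k * s, k * t) \<noteq> (0, 0)"
      proof
        assume "(1 + k * s, k * t) = (0, 0)"
        hence "V + w = 0" unfolding eq by simp
        thus False using False by simp
      qed
      hence "proj ((1 + k * s) *s V + (k * t) *s (L *v u)) \<in> join V (L *v u)" by (rule inJ)
      hence "proj (V + w) \<in> join V (L *v u)" by (simp only: eq)
      hence "proj (V + w) \<in> ?S" using sub[OF u] by blast
      thus ?thesis using pts_memD[of "V + w" "\<lambda>v. ?Q v = 0"] hom by blast
    qed
  qed
  have "?Q (v4 0 0 0 1) = 0" by (simp add: Qform_def)
  hence "?Q (V + v4 0 0 0 1) = 0" by (rule key)
  hence J: "V$0 = 0" using QV by (simp add: Qform_e3)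
  have g: "x*(c*V$2) + y*(c*V$1) + d*V$1 + e*V$2 - V$3 = 0" for x y
  proof -
    let ?w = "v4 1 x y (a*x^2 + b*y^2 + c*x*y + d*x + e*y + f)"
    have Qw: "?Q ?w = 0" by (simp add: Qform_def)
    hence "?Q (V + ?w) = 0" by (rule key)
    thus ?thesis using Qform_expand[OF J, of a b c d e f x y] QV Qw two by simp
  qed
  have D: "d*V$1 + e*V$2 - V$3 = 0" using g[of 0 0] by simp
  have "c*V$2 = 0" using g[of 1 0] D by algebra
  hence Y: "V$2 = 0" using c0 by simp
  have "c*V$1 = 0" using g[of 0 1] D by algebra
  hence X: "V$1 = 0" using c0 by simp
  have Z: "V$3 = 0" using D X Y by simp
  have "V = 0" using J X Y Z by (simp add: vec4_eq)
  thus False using V0 by simp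
qed

lemma fermat:
  assumes fin: "finite (UNIV :: 'a::field set)" and x: "(x::'a) \<noteq> 0"
  shows "x ^ (CARD('a) - 1) = 1"
proof -
  let ?N = "UNIV - {0::'a}"
  have finN: "finite ?N" using fin by simp
  have inj: "inj_on (\<lambda>y. x * y) ?N" using x by (auto intro: inj_onI)
  have img: "(\<lambda>y. x * y) ` ?N = ?N"
  proof
    show "(\<lambda>y. x * y) ` ?N \<subseteq> ?N" using x by auto
    show "?N \<subseteq> (\<lambda>y. x * y) ` ?N"
    proof
      fix z assume z: "z \<in> ?N"
      have "z = x * (z / x)" using x by simp
      moreover have "z / x \<in> ?N" using z x by simp
      ultimately show "z \<in> (\<lambda>y. x * y) ` ?N" by blast
    qed
  qed
  have "prod id ?N = prod id ((\<lambda>y. x * y) ` ?N)" using img by simp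
  also have "\<dots> = prod (\<lambda>y. x * y) ?N" using prod.reindex[OF inj, of id] by simp
  also have "\<dots> = x ^ card ?N * prod id ?N" by (simp add: prod.distrib)
  finally have eq: "prod id ?N = x ^ card ?N * prod id ?N" .
  have "prod id ?N \<noteq> 0" using finN by (simp add: prod_zero_iff)
  hence "x ^ card ?N = 1" using eq by (metis mult_cancel_right1)
  moreover have "card ?N = CARD('a) - 1" using fin by (simp add: card_Diff_singleton)
  ultimately show ?thesis by simp
qed

lemma exists_t0:
  assumes fin: "finite (UNIV :: 'a::field set)" and card: "CARD('a) = q^2" and q2: "q \<ge> 2"
  shows "\<exists>t::'a. t^(q+1) = 1 \<and> t \<noteq> 1"
proof -
  let ?p = "monom (1::'a) (q - 1) - 1"
  have pne: "?p \<noteq> 0"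
  proof
    assume "?p = 0"
    hence "coeff ?p (q - 1) = 0" by simp
    thus False using q2 by (simp add: coeff_monom)
  qed
  have deg: "degree ?p \<le> q - 1"
    by (rule order.trans[OF degree_diff_le_max]) (simp add: degree_monom_eq)
  have "card {x. poly ?p x = 0} \<le> q - 1" using card_poly_roots_bound[OF pne] deg by linarith
  moreover have "{x. poly ?p x = 0} = {x::'a. x^(q-1) = 1}" by (simp add: poly_monom)
  ultimately have cR: "card {x::'a. x^(q-1) = 1} \<le> q - 1" by simp
  have "\<exists>x::'a. x \<noteq> 0 \<and> x^(q-1) \<noteq> 1"
  proof (rule ccontr)
    assume "\<not> ?thesis"
    hence "UNIV - {0::'a} \<subseteq> {x. x^(q-1) = 1}" by auto
    hence "card (UNIV - {0::'a}) \<le> card {x::'a. x^(q-1) = 1}"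
      by (intro card_mono) (auto intro: finite_subset[OF subset_UNIV fin])
    moreover have "card (UNIV - {0::'a}) = q^2 - 1" using fin card by (simp add: card_Diff_singleton)
    moreover have "q - 1 < q^2 - 1"
    proof -
      have "q * 2 \<le> q * q" using q2 by (intro mult_left_mono) auto
      hence "q - 1 < q * q - 1" using q2 by linarith
      thus ?thesis by (simp add: power2_eq_square)
    qed
    ultimately show False using cR by linarith
  qed
  then obtain x :: 'a where x: "x \<noteq> 0" "x^(q-1) \<noteq> 1" by blast
  have "(q - 1) * (q + 1) = CARD('a) - 1" using card q2
    by (simp add: power2_eq_square algebra_simps diff_mult_distrib)
  hence "(x^(q-1))^(q+1) = x ^ (CARD('a) - 1)" by (metis power_mult)
  hence "(x^(q-1))^(q+1) = 1" using fermat[OF fin x(1)] by simp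
  thus ?thesis using x(2) by blast
qed

definition v3 :: "'a \<Rightarrow> 'a \<Rightarrow> 'a \<Rightarrow> 'a^3" where
  "v3 x y z = (\<chi> i. if i = 0 then x else if i = 1 then y else z)"

lemma v3_comp [simp]: "v3 x y z $ 0 = x" "v3 x y z $ 1 = y" "v3 x y z $ 2 = z"
  by (simp_all add: v3_def)

lemma three0: "(3::3) = 0" by simp

lemma forall3: "(\<forall>i::3. P i) \<longleftrightarrow> P 0 \<and> P 1 \<and> P 2"
  using forall_3[of P] unfolding three0 by auto

lemma vec3_eq: "(u::'a^3) = v \<longleftrightarrow> u$0 = v$0 \<and> u$1 = v$1 \<and> u$2 = v$2"
  by (simp add: vec_eq_iff forall3)

lemma sum3: "sum f (UNIV::3 set) = f 0 + f 1 + f 2"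
  using sum_3[of f] unfolding three0 by (simp add: ac_simps)

lemma sum4: "sum f (UNIV::4 set) = f 0 + f 1 + f 2 + f 3"
  using sum_4[of f] four0 by (simp add: ac_simps)

lemma Qform_sq: "Qform (\<alpha>^2) (\<beta>^2) (2*\<alpha>*\<beta>) 0 0 0 w = (\<alpha>*w$1 + \<beta>*w$2)^2 - w$3*w$0"
  by (simp add: Qform_def algebra_simps power2_eq_square)

lemma cone_ex:
  fixes \<alpha> \<beta> :: "'a::field"
  assumes a0: "\<alpha> \<noteq> 0"
  shows "is_quadratic_cone (pts (\<lambda>v. Qform (\<alpha>^2) (\<beta>^2) (2*\<alpha>*\<beta>) 0 0 0 v = 0))"
proof -
  let ?Q = "Qform (\<alpha>^2) (\<beta>^2) (2*\<alpha>*\<beta>) 0 0 0"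
  define L :: "'a^3^4" where "L = (\<chi> i j. if i = 0 then (if j = 0 then 1 else 0)
      else if i = 1 then (if j = 2 then 1/\<alpha> else 0)
      else if i = 2 then 0 else (if j = 1 then 1 else 0))"
  have Lu: "L *v u = v4 (u$0) (u$2/\<alpha>) 0 (u$1)" for u
    by (simp add: vec4_eq L_def matrix_vector_mult_def sum3)
  define V where "V = v4 0 (-\<beta>) \<alpha> 0"
  have inj: "inj (\<lambda>u. L *v u)"
    by (rule injI) (simp add: Lu vec4_eq vec3_eq a0)
  have ne: "\<forall>u. L *v u \<noteq> V" using a0 by (simp add: Lu V_def vec4_eq)
  let ?U = "\<Union> {join V (L *v u) | u. u \<noteq> 0 \<and> u $ 0 * u $ 1 = (u $ 2) ^ 2}"
  have comb: "s *s V + t *s (L *v u) = v4 (t*u$0) (t*u$2/\<alpha> - s*\<beta>) (s*\<alpha>) (t*u$1)" for s t u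
    by (simp add: vec4_eq Lu V_def)
  have "pts (\<lambda>v. ?Q v = 0) = ?U"
  proof
    show "pts (\<lambda>v. ?Q v = 0) \<subseteq> ?U"
    proof
      fix x assume "x \<in> pts (\<lambda>v. ?Q v = 0)"
      then obtain v where x: "x = proj v" and v: "v \<noteq> 0" "?Q v = 0" unfolding pts_def by blast
      define s where "s = v$2 / \<alpha>"
      define u where "u = v3 (v$0) (v$3) (\<alpha>* v$1 + \<beta>* v$2)"
      have h: "(\<alpha> * v$1 + \<beta> * v$2)^2 - v$3 * v$0 = 0" using v(2) by (simp only: Qform_sq)
      have conic: "u $ 0 * u $ 1 = (u $ 2) ^ 2" using h unfolding u_def v3_comp by algebra
      show "x \<in> ?U"
      proof (cases "u = 0")
        case False
        have "v = s *s V + 1 *s (L *v u)" using a0 unfolding comb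
          by (simp add: vec4_eq u_def s_def field_simps)
        hence "\<exists>s' t'. x = proj (s' *s V + t' *s (L *v u)) \<and> (s', t') \<noteq> (0, 0)"
          unfolding x by (intro exI[of _ s] exI[of _ 1]) simp
        hence "x \<in> join V (L *v u)" unfolding join_def by blast
        thus ?thesis using False conic by blast
      next
        case True
        define u0 where "u0 = v3 1 0 (0::'a)"
        have u0: "u0 \<noteq> 0" "u0 $ 0 * u0 $ 1 = (u0 $ 2) ^ 2" by (simp_all add: u0_def vec3_eq)
        have uu: "v$0 = 0" "v$3 = 0" "\<alpha>* v$1 + \<beta>* v$2 = 0" using True by (simp_all add: u_def vec3_eq)
        have "v$1 = - \<beta> * v$2 / \<alpha>" using uu(3) a0 by (simp add: field_simps) (metis add.commute add_eq_0_iff2 mult.commute)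
        hence "v = s *s V + 0 *s (L *v u0)" using a0 uu unfolding comb
          by (simp add: vec4_eq s_def field_simps)
        moreover have "s \<noteq> 0"
        proof
          assume "s = 0"
          hence "v = 0" using \<open>v = s *s V + 0 *s (L *v u0)\<close> by simp
          thus False using v(1) by simp
        qed
        ultimately have "\<exists>s' t'. x = proj (s' *s V + t' *s (L *v u0)) \<and> (s', t') \<noteq> (0, 0)"
          unfolding x by (intro exI[of _ s] exI[of _ 0]) simp
        hence "x \<in> join V (L *v u0)" unfolding join_def by blast
        thus ?thesis using u0 by blast
      qed
    qed
  next
    show "?U \<subseteq> pts (\<lambda>v. ?Q v = 0)"
    proof
      fix x assume "x \<in> ?U"
      then obtain u where u: "u \<noteq> 0" "u $ 0 * u $ 1 = (u $ 2) ^ 2" and xj: "x \<in> join V (L *v u)" by blast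
      then obtain s t where st: "x = proj (s *s V + t *s (L *v u))" "(s, t) \<noteq> (0, 0)"
        unfolding join_def by blast
      let ?w = "s *s V + t *s (L *v u)"
      have w: "?w = v4 (t*u$0) (t*u$2/\<alpha> - s*\<beta>) (s*\<alpha>) (t*u$1)" by (rule comb)
      have wne: "?w \<noteq> 0"
      proof
        assume w0: "?w = 0"
        have w0': "v4 (t*u$0) (t*u$2/\<alpha> - s*\<beta>) (s*\<alpha>) (t*u$1) = 0" using w0 unfolding w .
        hence "s*\<alpha> = 0" by (simp add: vec4_eq)
        hence s0: "s = 0" using a0 by simp
        hence t0: "t \<noteq> 0" using st(2) by simp
        have "t*u$0 = 0" "t*u$1 = 0" "t*u$2/\<alpha> = 0" using w0' s0 by (simp_all add: vec4_eq)
        hence "u = 0" using t0 a0 by (simp add: vec3_eq)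
        thus False using u(1) by simp
      qed
      have "?Q ?w = (\<alpha>*(t*u$2/\<alpha> - s*\<beta>) + \<beta>*(s*\<alpha>))^2 - (t*u$1)*(t*u$0)"
        unfolding w by (simp only: Qform_sq v4_comp)
      also have "\<dots> = t^2 * ((u$2)^2 - u$0 * u$1)" using a0 by (simp add: field_simps power2_eq_square)
      also have "\<dots> = 0" using u(2) by simp
      finally have "?Q ?w = 0" .
      thus "x \<in> pts (\<lambda>v. ?Q v = 0)" using st(1) wne unfolding pts_def by blast
    qed
  qed
  thus ?thesis unfolding is_quadratic_cone_def using inj ne by blast
qed

lemma Qform_prod: "Qform (\<alpha>*\<gamma>) (\<beta>*\<delta>) (\<alpha>*\<delta>+\<beta>*\<gamma>) 0 0 0 w
   = (\<alpha>*w$1+\<beta>*w$2)*(\<gamma>*w$1+\<delta>*w$2) - w$3*w$0"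
  by (simp add: Qform_def algebra_simps power2_eq_square)

lemma lin_inv:
  fixes \<alpha> \<beta> \<gamma> \<delta> x y :: "'a::field"
  assumes "\<Delta> = \<alpha>*\<delta> - \<beta>*\<gamma>" "\<Delta> \<noteq> 0"
  shows "\<alpha>*((\<delta>*x - \<beta>*y)/\<Delta>) + \<beta>*((\<alpha>*y - \<gamma>*x)/\<Delta>) = x"
    and "\<gamma>*((\<delta>*x - \<beta>*y)/\<Delta>) + \<delta>*((\<alpha>*y - \<gamma>*x)/\<Delta>) = y"
proof -
  have "\<alpha>*((\<delta>*x - \<beta>*y)/\<Delta>) + \<beta>*((\<alpha>*y - \<gamma>*x)/\<Delta>) = (\<alpha>*(\<delta>*x - \<beta>*y) + \<beta>*(\<alpha>*y - \<gamma>*x))/\<Delta>"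
    by (simp add: add_divide_distrib)
  also have "\<alpha>*(\<delta>*x - \<beta>*y) + \<beta>*(\<alpha>*y - \<gamma>*x) = \<Delta>*x" unfolding assms(1) by (simp add: algebra_simps)
  finally show "\<alpha>*((\<delta>*x - \<beta>*y)/\<Delta>) + \<beta>*((\<alpha>*y - \<gamma>*x)/\<Delta>) = x" using assms(2) by simp
  have "\<gamma>*((\<delta>*x - \<beta>*y)/\<Delta>) + \<delta>*((\<alpha>*y - \<gamma>*x)/\<Delta>) = (\<gamma>*(\<delta>*x - \<beta>*y) + \<delta>*(\<alpha>*y - \<gamma>*x))/\<Delta>"
    by (simp add: add_divide_distrib)
  also have "\<gamma>*(\<delta>*x - \<beta>*y) + \<delta>*(\<alpha>*y - \<gamma>*x) = \<Delta>*y" unfolding assms(1) by (simp add: algebra_simps)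
  finally show "\<gamma>*((\<delta>*x - \<beta>*y)/\<Delta>) + \<delta>*((\<alpha>*y - \<gamma>*x)/\<Delta>) = y" using assms(2) by simp
qed

lemma hyp_ex:
  fixes \<alpha> \<beta> \<gamma> \<delta> :: "'a::field"
  assumes D: "\<alpha>*\<delta> - \<beta>*\<gamma> \<noteq> 0"
  shows "is_hyperbolic_quadric (pts (\<lambda>v. Qform (\<alpha>*\<gamma>) (\<beta>*\<delta>) (\<alpha>*\<delta>+\<beta>*\<gamma>) 0 0 0 v = 0))"
proof -
  let ?Q = "Qform (\<alpha>*\<gamma>) (\<beta>*\<delta>) (\<alpha>*\<delta>+\<beta>*\<gamma>) 0 0 0"
  define \<Delta> where "\<Delta> = \<alpha>*\<delta> - \<beta>*\<gamma>"
  have D': "\<Delta> \<noteq> 0" using D by (simp add: \<Delta>_def)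
  define M :: "'a^4^4" where "M = (\<chi> i j. if i = 0 then (if j = 2 then 1 else 0)
      else if i = 1 then (if j = 0 then \<delta>/\<Delta> else if j = 1 then -\<beta>/\<Delta> else 0)
      else if i = 2 then (if j = 0 then -\<gamma>/\<Delta> else if j = 1 then \<alpha>/\<Delta> else 0)
      else (if j = 3 then -1 else 0))"
  have Mv: "M *v v = v4 (v$2) ((\<delta>* v$0 - \<beta>* v$1)/\<Delta>) ((\<alpha>* v$1 - \<gamma>* v$0)/\<Delta>) (-v$3)" for v
    by (simp add: vec4_eq M_def matrix_vector_mult_def sum4 diff_divide_distrib)
  define N :: "'a^4 \<Rightarrow> 'a^4" where "N w = v4 (\<alpha>*w$1+\<beta>*w$2) (\<gamma>*w$1+\<delta>*w$2) (w$0) (-w$3)" for w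
  have MN: "M *v N w = w" for w
    using D' by (simp add: Mv N_def vec4_eq field_simps \<Delta>_def)
  have NM: "N (M *v v) = v" for v
    using lin_inv[OF \<Delta>_def D', of "v$0" "v$1"] by (simp add: Mv N_def vec4_eq)
  have inj: "inj ((*v) M)"
    by (rule injI) (metis NM)
  have detM: "det M \<noteq> 0"
    using inj by (simp add: invertible_det_nz[symmetric] invertible_left_inverse matrix_left_invertible_injective)
  have "pts (\<lambda>v. ?Q v = 0) = {proj (M *v v) | v. v \<noteq> 0 \<and> v $ 0 * v $ 1 + v $ 2 * v $ 3 = 0}"
  proof
    show "pts (\<lambda>v. ?Q v = 0) \<subseteq> {proj (M *v v) | v. v \<noteq> 0 \<and> v $ 0 * v $ 1 + v $ 2 * v $ 3 = 0}"
    proof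
      fix x assume "x \<in> pts (\<lambda>v. ?Q v = 0)"
      then obtain w where x: "x = proj w" and w: "w \<noteq> 0" "?Q w = 0" unfolding pts_def by blast
      have "N w \<noteq> 0"
      proof
        assume "N w = 0"
        hence "w = M *v 0" using MN[of w] by simp
        thus False using w(1) by simp
      qed
      moreover have "(N w) $ 0 * (N w) $ 1 + (N w) $ 2 * (N w) $ 3 = 0"
        using w(2) by (simp add: N_def Qform_prod algebra_simps)
      moreover have "x = proj (M *v N w)" using x MN by simp
      ultimately show "x \<in> {proj (M *v v) | v. v \<noteq> 0 \<and> v $ 0 * v $ 1 + v $ 2 * v $ 3 = 0}" by blast
    qed
  next
    show "{proj (M *v v) | v. v \<noteq> 0 \<and> v $ 0 * v $ 1 + v $ 2 * v $ 3 = 0} \<subseteq> pts (\<lambda>v. ?Q v = 0)"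
    proof
      fix x assume "x \<in> {proj (M *v v) | v. v \<noteq> 0 \<and> v $ 0 * v $ 1 + v $ 2 * v $ 3 = 0}"
      then obtain v where x: "x = proj (M *v v)" and v: "v \<noteq> 0" "v $ 0 * v $ 1 + v $ 2 * v $ 3 = 0" by blast
      let ?w = "M *v v"
      have "?w \<noteq> 0"
      proof
        assume "?w = 0"
        hence "v = N 0" using NM[of v] by simp
        thus False using v(1) by (simp add: N_def vec4_eq)
      qed
      moreover have "?Q ?w = 0"
      proof -
        have nm: "N ?w = v" by (rule NM)
        have c: "\<alpha>*?w$1+\<beta>*?w$2 = v$0" "\<gamma>*?w$1+\<delta>*?w$2 = v$1" "?w$0 = v$2" "-?w$3 = v$3"
          using nm unfolding N_def vec4_eq v4_comp by blast+
        have w3: "?w$3 = - v$3" using c(4) by (metis minus_minus)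
        have "?Q ?w = v$0 * v$1 - ?w$3 * ?w$0" unfolding Qform_prod c(1) c(2) by (rule refl)
        also have "\<dots> = v$0 * v$1 + v$2 * v$3" unfolding w3 c(3) by simp
        finally have "?Q ?w = v$0 * v$1 + v$2 * v$3" .
        thus ?thesis using v(2) by simp
      qed
      ultimately show "x \<in> pts (\<lambda>v. ?Q v = 0)" unfolding pts_def using x by blast
    qed
  qed
  thus ?thesis unfolding is_hyperbolic_quadric_def using detM by blast
qed

lemma C_sub_lines:
  assumes "q > 0"
  shows "C_infty q a b c d e f \<subseteq> insert (proj (v4 0 0 0 1)) (\<Union>t\<in>{t. a*t^2 + c*t + b = 0 \<and> t^(q+1) + 1 = 0}. lineT t)"
proof
  fix x assume "x \<in> C_infty q a b c d e f"
  hence "x = proj (v4 0 0 0 1) \<or> (\<exists>t z. t \<in> {t. a*t^2 + c*t + b = 0 \<and> t^(q+1) + 1 = 0} \<and> x = proj (v4 0 t 1 z))"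
    unfolding C_struct[OF assms] by auto
  thus "x \<in> insert (proj (v4 0 0 0 1)) (\<Union>t\<in>{t. a*t^2 + c*t + b = 0 \<and> t^(q+1) + 1 = 0}. lineT t)"
  proof
    assume "\<exists>t z. t \<in> {t. a*t^2 + c*t + b = 0 \<and> t^(q+1) + 1 = 0} \<and> x = proj (v4 0 t 1 z)"
    then obtain t z where t: "t \<in> {t. a*t^2 + c*t + b = 0 \<and> t^(q+1) + 1 = 0}" and xt: "x = proj (v4 0 t 1 z)" by blast
    have "x \<in> lineT t" unfolding xt by (rule in_lineT(2))
    thus ?thesis using t by blast
  qed simp
qed

lemma C_cases:
  fixes a b c d e f :: "'a::field"
  assumes fin: "finite (UNIV :: 'a set)" and card: "CARD('a) = q^2" and q: "q > 0"
    and T: "{t. a*t^2 + c*t + b = 0 \<and> t^(q+1) + 1 = 0} = T"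
  shows "T = {} \<Longrightarrow> card (C_infty q a b c d e f) = 1"
    and "T = {t} \<Longrightarrow> card (C_infty q a b c d e f) = q^2 + 1 \<and> (\<exists>L. is_line L \<and> C_infty q a b c d e f \<subseteq> L)"
    and "T = {t1, t2} \<Longrightarrow> t1 \<noteq> t2 \<Longrightarrow> card (C_infty q a b c d e f) = 2 * q^2 + 1 \<and>
          (\<exists>L1 L2. is_line L1 \<and> is_line L2 \<and> C_infty q a b c d e f \<subseteq> L1 \<union> L2)"
proof -
  have cC: "card (C_infty q a b c d e f) = 1 + card T * q^2" using C_card[OF q fin, of a b c d e f] T card by simp
  have sub: "C_infty q a b c d e f \<subseteq> insert (proj (v4 0 0 0 1)) (\<Union>t\<in>T. lineT t)"
    using C_sub_lines[OF q, of a b c d e f] T by simp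
  show "T = {} \<Longrightarrow> card (C_infty q a b c d e f) = 1" using cC by simp
  show "T = {t} \<Longrightarrow> card (C_infty q a b c d e f) = q^2 + 1 \<and> (\<exists>L. is_line L \<and> C_infty q a b c d e f \<subseteq> L)"
  proof -
    assume Tt: "T = {t}"
    have "insert (proj (v4 0 0 0 1)) (\<Union>t\<in>T. lineT t) = lineT t" using Tt in_lineT(1)[of t] by (simp add: insert_absorb)
    hence "C_infty q a b c d e f \<subseteq> lineT t" using sub by simp
    moreover have "card (C_infty q a b c d e f) = q^2 + 1" using cC Tt by simp
    ultimately show ?thesis using lineT_is_line[of t] by blast
  qed
  show "T = {t1, t2} \<Longrightarrow> t1 \<noteq> t2 \<Longrightarrow> card (C_infty q a b c d e f) = 2 * q^2 + 1 \<and>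
          (\<exists>L1 L2. is_line L1 \<and> is_line L2 \<and> C_infty q a b c d e f \<subseteq> L1 \<union> L2)"
  proof -
    assume Tt: "T = {t1, t2}" and ne: "t1 \<noteq> t2"
    have "insert (proj (v4 0 0 0 1)) (\<Union>t\<in>T. lineT t) = lineT t1 \<union> lineT t2" using Tt in_lineT(1)[of t1] by auto
    hence "C_infty q a b c d e f \<subseteq> lineT t1 \<union> lineT t2" using sub by simp
    moreover have "card (C_infty q a b c d e f) = 2 * q^2 + 1" using cC Tt ne by simp
    ultimately show ?thesis using lineT_is_line[of t1] lineT_is_line[of t2] by blast
  qed
qed

lemma neg_char2: "(2::'a::field) = 0 \<Longrightarrow> - x = (x::'a)"
proof -
  assume two: "(2::'a) = 0"
  have "x + x = 2 * x" by simp
  hence "x + x = 0" using two by simp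
  thus "- x = x" by (simp add: add_eq_0_iff2 eq_neg_iff_add_eq_0)
qed

lemma plus1_char2: "(2::'a::field) = 0 \<Longrightarrow> (x + 1 = 0) = (x = (1::'a))"
proof -
  assume two: "(2::'a) = 0"
  have "(x + 1 = 0) = (x = - 1)" by (simp add: eq_neg_iff_add_eq_0)
  also have "- 1 = (1::'a)" using neg_char2[OF two] by blast
  finally show ?thesis .
qed



lemma two_roots_c0:
  fixes a b t1 t2 :: "'a::field"
  assumes two: "(2::'a) = 0" and r1: "a*t1^2 + b = 0" and r2: "a*t2^2 + b = 0" and ne: "t1 \<noteq> t2"
  shows "a = 0 \<and> b = 0"
proof -
  have sq: "(t1 - t2)^2 = t1^2 - t2^2 + 2*(t2^2 - t1*t2)" by (simp add: power2_eq_square algebra_simps)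
  hence sq': "(t1 - t2)^2 = t1^2 - t2^2" using two by simp
  have "a*(t1 - t2)^2 = (a*t1^2 + b) - (a*t2^2 + b)" unfolding sq' by (simp add: algebra_simps)
  hence "a*(t1 - t2)^2 = 0" using r1 r2 by simp
  hence a0: "a = 0" using ne by simp
  thus ?thesis using r1 by simp
qed

lemma T_E2:
  assumes two: "(2::'a::field) = 0"
  shows "{t::'a. 1*t^2 + 0*t + 1 = 0 \<and> t^(q+1) + 1 = 0} = {1}"
proof -
  have sq: "t^2 + 1 = (t + 1)^2" for t :: 'a
  proof -
    have "(t + 1)^2 = t^2 + 2*t + 1" by (simp add: power2_eq_square algebra_simps)
    thus ?thesis using two by simp
  qed
  have "(1*t^2 + 0*t + 1 = 0 \<and> t^(q+1) + 1 = 0) \<longleftrightarrow> t = 1" for t :: 'a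
  proof
    assume "1*t^2 + 0*t + 1 = 0 \<and> t^(q+1) + 1 = 0"
    hence "(t + 1)^2 = 0" using sq[of t] by simp
    hence "t + 1 = 0" by simp
    thus "t = 1" using plus1_char2[OF two] by blast
  next
    assume "t = 1"
    thus "1*t^2 + 0*t + 1 = 0 \<and> t^(q+1) + 1 = 0" using two by simp
  qed
  thus ?thesis by auto
qed

lemma T_E4:
  assumes two: "(2::'a::field) = 0"
  shows "{t::'a. 0*t^2 + 1*t + 1 = 0 \<and> t^(q+1) + 1 = 0} = {1}"
proof -
  have "(0*t^2 + 1*t + 1 = 0 \<and> t^(q+1) + 1 = 0) \<longleftrightarrow> t = 1" for t :: 'a
    using plus1_char2[OF two, of t] two by auto
  thus ?thesis by auto
qed

lemma T_E5:
  assumes two: "(2::'a::field) = 0" and t0: "t0^(q+1) = (1::'a)"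
  shows "{t::'a. 1*t^2 + (t0 + 1)*t + t0 = 0 \<and> t^(q+1) + 1 = 0} = {1, t0}"
proof -
  have f: "1*t^2 + (t0 + 1)*t + t0 = (t + 1) * (t + t0)" for t :: 'a
    by (simp add: power2_eq_square algebra_simps)
  have "(1*t^2 + (t0 + 1)*t + t0 = 0 \<and> t^(q+1) + 1 = 0) \<longleftrightarrow> t = 1 \<or> t = t0" for t :: 'a
  proof
    assume "1*t^2 + (t0 + 1)*t + t0 = 0 \<and> t^(q+1) + 1 = 0"
    hence "t + 1 = 0 \<or> t + t0 = 0" unfolding f by simp
    thus "t = 1 \<or> t = t0"
    proof
      assume "t + 1 = 0" thus ?thesis using plus1_char2[OF two] by blast
    next
      assume "t + t0 = 0"
      hence "t = - t0" by (simp add: eq_neg_iff_add_eq_0)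
      thus ?thesis using neg_char2[OF two, of t0] by simp
    qed
  next
    assume "t = 1 \<or> t = t0"
    thus "1*t^2 + (t0 + 1)*t + t0 = 0 \<and> t^(q+1) + 1 = 0"
    proof
      assume "t = 1" thus ?thesis unfolding f using two by simp
    next
      assume "t = t0"
      hence "t + t0 = 0" using neg_char2[OF two, of t0] by (metis eq_neg_iff_add_eq_0)
      moreover have "t^(q+1) + 1 = 0" using \<open>t = t0\<close> t0 two by simp
      ultimately show ?thesis unfolding f by simp
    qed
  qed
  thus ?thesis by auto
qed

theorem lemma2:
  fixes q h :: nat
  assumes "finite (UNIV :: 'a::field set)"
    and "h \<ge> 1" and "q = 2 ^ h"
    and "CARD('a) = q ^ 2"
  shows
   "(\<forall>a b c d e f :: 'a. irreducible_qform (Qcoef a b c d e f) \<longrightarrow>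
       (is_quadratic_cone (pts (\<lambda>v. Qform a b c d e f v = 0)) \<longrightarrow>
          card (C_infty q a b c d e f) = 1 \<or>
          (card (C_infty q a b c d e f) = q^2 + 1 \<and>
             (\<exists>L. is_line L \<and> C_infty q a b c d e f \<subseteq> L))) \<and>
       (is_hyperbolic_quadric (pts (\<lambda>v. Qform a b c d e f v = 0)) \<longrightarrow>
          card (C_infty q a b c d e f) = 1 \<or>
          (card (C_infty q a b c d e f) = q^2 + 1 \<and>
             (\<exists>L. is_line L \<and> C_infty q a b c d e f \<subseteq> L)) \<or>
          (card (C_infty q a b c d e f) = 2 * q^2 + 1 \<and>
             (\<exists>L1 L2. is_line L1 \<and> is_line L2 \<and> C_infty q a b c d e f \<subseteq> L1 \<union> L2))))
    \<and> (\<exists>a b c d e f :: 'a. irreducible_qform (Qcoef a b c d e f) \<and>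
          is_quadratic_cone (pts (\<lambda>v. Qform a b c d e f v = 0)) \<and>
          card (C_infty q a b c d e f) = 1)
    \<and> (\<exists>a b c d e f :: 'a. irreducible_qform (Qcoef a b c d e f) \<and>
          is_quadratic_cone (pts (\<lambda>v. Qform a b c d e f v = 0)) \<and>
          card (C_infty q a b c d e f) = q^2 + 1 \<and>
          (\<exists>L. is_line L \<and> C_infty q a b c d e f \<subseteq> L))
    \<and> (\<exists>a b c d e f :: 'a. irreducible_qform (Qcoef a b c d e f) \<and>
          is_hyperbolic_quadric (pts (\<lambda>v. Qform a b c d e f v = 0)) \<and>
          card (C_infty q a b c d e f) = 1)
    \<and> (\<exists>a b c d e f :: 'a. irreducible_qform (Qcoef a b c d e f) \<and>
          is_hyperbolic_quadric (pts (\<lambda>v. Qform a b c d e f v = 0)) \<and>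
          card (C_infty q a b c d e f) = q^2 + 1 \<and>
          (\<exists>L. is_line L \<and> C_infty q a b c d e f \<subseteq> L))
    \<and> (\<exists>a b c d e f :: 'a. irreducible_qform (Qcoef a b c d e f) \<and>
          is_hyperbolic_quadric (pts (\<lambda>v. Qform a b c d e f v = 0)) \<and>
          card (C_infty q a b c d e f) = 2 * q^2 + 1 \<and>
          (\<exists>L1 L2. is_line L1 \<and> is_line L2 \<and> C_infty q a b c d e f \<subseteq> L1 \<union> L2))"
proof -
  have fin: "finite (UNIV :: 'a set)" by (rule assms(1))
  have q2: "q \<ge> 2"
  proof -
    have "(2::nat)^1 \<le> 2^h" using assms(2) by (intro power_increasing) auto
    thus ?thesis using assms(3) by simp
  qed
  hence q0: "q > 0" by simp
  have cardq: "CARD('a) = q^2" by (rule assms(4))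
  have two: "(2::'a) = 0"
  proof (rule char2[OF fin, of "2*h"])
    show "CARD('a) = 2 ^ (2 * h)" using assms(3,4) by (simp add: power_mult[symmetric] mult.commute)
    show "1 \<le> 2 * h" using assms(2) by simp
  qed
  note CC = C_cases[OF fin cardq q0 refl]
  have U: "\<forall>a b c d e f :: 'a. irreducible_qform (Qcoef a b c d e f) \<longrightarrow>
       (is_quadratic_cone (pts (\<lambda>v. Qform a b c d e f v = 0)) \<longrightarrow>
          card (C_infty q a b c d e f) = 1 \<or>
          (card (C_infty q a b c d e f) = q^2 + 1 \<and>
             (\<exists>L. is_line L \<and> C_infty q a b c d e f \<subseteq> L))) \<and>
       (is_hyperbolic_quadric (pts (\<lambda>v. Qform a b c d e f v = 0)) \<longrightarrow>
          card (C_infty q a b c d e f) = 1 \<or>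
          (card (C_infty q a b c d e f) = q^2 + 1 \<and>
             (\<exists>L. is_line L \<and> C_infty q a b c d e f \<subseteq> L)) \<or>
          (card (C_infty q a b c d e f) = 2 * q^2 + 1 \<and>
             (\<exists>L1 L2. is_line L1 \<and> is_line L2 \<and> C_infty q a b c d e f \<subseteq> L1 \<union> L2)))"
  proof (intro allI impI)
    fix a b c d e f :: 'a
    assume irr: "irreducible_qform (Qcoef a b c d e f)"
    hence abc: "\<not> (a = 0 \<and> b = 0 \<and> c = 0)" by (simp add: irred_iff)
    let ?T = "{t. a*t^2 + c*t + b = 0 \<and> t^(q+1) + 1 = 0}"
    have CC1: "?T = {} \<Longrightarrow> card (C_infty q a b c d e f) = 1"
      by (rule C_cases(1)[OF fin cardq q0 refl])
    have CC2: "?T = {t} \<Longrightarrow> card (C_infty q a b c d e f) = q^2 + 1 \<and> (\<exists>L. is_line L \<and> C_infty q a b c d e f \<subseteq> L)" for t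
      by (rule C_cases(2)[OF fin cardq q0 refl])
    have CC3: "?T = {t1, t2} \<Longrightarrow> t1 \<noteq> t2 \<Longrightarrow> card (C_infty q a b c d e f) = 2 * q^2 + 1 \<and>
          (\<exists>L1 L2. is_line L1 \<and> is_line L2 \<and> C_infty q a b c d e f \<subseteq> L1 \<union> L2)" for t1 t2
      by (rule C_cases(3)[OF fin cardq q0 refl])
    have cs: "?T = {} \<or> (\<exists>t. ?T = {t}) \<or> (\<exists>t1 t2. t1 \<noteq> t2 \<and> ?T = {t1, t2})"
      by (rule roots_cases[OF abc]) auto
    have gen: "card (C_infty q a b c d e f) = 1 \<or>
          (card (C_infty q a b c d e f) = q^2 + 1 \<and>
             (\<exists>L. is_line L \<and> C_infty q a b c d e f \<subseteq> L)) \<or>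
          (card (C_infty q a b c d e f) = 2 * q^2 + 1 \<and>
             (\<exists>L1 L2. is_line L1 \<and> is_line L2 \<and> C_infty q a b c d e f \<subseteq> L1 \<union> L2))"
    proof -
      { assume "?T = {}" hence ?thesis using CC1 by blast }
      moreover { fix t assume "?T = {t}" hence ?thesis using CC2 by blast }
      moreover { fix t1 t2 assume "t1 \<noteq> t2" "?T = {t1, t2}" hence ?thesis using CC3 by blast }
      ultimately show ?thesis using cs by blast
    qed
    show "(is_quadratic_cone (pts (\<lambda>v. Qform a b c d e f v = 0)) \<longrightarrow>
          card (C_infty q a b c d e f) = 1 \<or>
          (card (C_infty q a b c d e f) = q^2 + 1 \<and>
             (\<exists>L. is_line L \<and> C_infty q a b c d e f \<subseteq> L))) \<and>
       (is_hyperbolic_quadric (pts (\<lambda>v. Qform a b c d e f v = 0)) \<longrightarrow>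
          card (C_infty q a b c d e f) = 1 \<or>
          (card (C_infty q a b c d e f) = q^2 + 1 \<and>
             (\<exists>L. is_line L \<and> C_infty q a b c d e f \<subseteq> L)) \<or>
          (card (C_infty q a b c d e f) = 2 * q^2 + 1 \<and>
             (\<exists>L1 L2. is_line L1 \<and> is_line L2 \<and> C_infty q a b c d e f \<subseteq> L1 \<union> L2)))"
    proof (intro conjI impI)
      assume cone: "is_quadratic_cone (pts (\<lambda>v. Qform a b c d e f v = 0))"
      have c0: "c = 0" by (rule cone_c0[OF cone two])
      have not2: "\<not> (\<exists>t1 t2. t1 \<noteq> t2 \<and> ?T = {t1, t2})"
      proof
        assume "\<exists>t1 t2. t1 \<noteq> t2 \<and> ?T = {t1, t2}"
        then obtain t1 t2 where ne: "t1 \<noteq> t2" and TT: "?T = {t1, t2}" by blast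
        have "t1 \<in> ?T" unfolding TT by simp
        hence r1: "a*t1^2 + b = 0" using c0 by simp
        have "t2 \<in> ?T" unfolding TT by simp
        hence r2: "a*t2^2 + b = 0" using c0 by simp
        have "a = 0 \<and> b = 0" by (rule two_roots_c0[OF two r1 r2 ne])
        hence "a = 0" "b = 0" by simp_all
        thus False using abc c0 \<open>a = 0\<close> by simp
      qed
      show "card (C_infty q a b c d e f) = 1 \<or>
          (card (C_infty q a b c d e f) = q^2 + 1 \<and>
             (\<exists>L. is_line L \<and> C_infty q a b c d e f \<subseteq> L))"
      proof -
        { assume "?T = {}" hence ?thesis using CC1 by blast }
        moreover { fix t assume "?T = {t}" hence ?thesis using CC2 by blast }
        ultimately show ?thesis using cs not2 by blast
      qed
    next
      assume "is_hyperbolic_quadric (pts (\<lambda>v. Qform a b c d e f v = 0))"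
      show "card (C_infty q a b c d e f) = 1 \<or>
          (card (C_infty q a b c d e f) = q^2 + 1 \<and>
             (\<exists>L. is_line L \<and> C_infty q a b c d e f \<subseteq> L)) \<or>
          (card (C_infty q a b c d e f) = 2 * q^2 + 1 \<and>
             (\<exists>L1 L2. is_line L1 \<and> is_line L2 \<and> C_infty q a b c d e f \<subseteq> L1 \<union> L2))"
        by (rule gen)
    qed
  qed
  have E1: "\<exists>a b c d e f :: 'a. irreducible_qform (Qcoef a b c d e f) \<and>
          is_quadratic_cone (pts (\<lambda>v. Qform a b c d e f v = 0)) \<and>
          card (C_infty q a b c d e f) = 1"
  proof (intro exI conjI)
    show "irreducible_qform (Qcoef (1::'a) 0 0 0 0 0)" by (simp add: irred_iff)
    show "is_quadratic_cone (pts (\<lambda>v. Qform (1::'a) 0 0 0 0 0 v = 0))" using cone_ex[of "1::'a" 0] by simp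
    have "{t::'a. 1*t^2 + 0*t + 0 = 0 \<and> t^(q+1) + 1 = 0} = {}" by simp
    thus "card (C_infty q (1::'a) 0 0 0 0 0) = 1" by (rule CC(1))
  qed
  have E2: "\<exists>a b c d e f :: 'a. irreducible_qform (Qcoef a b c d e f) \<and>
          is_quadratic_cone (pts (\<lambda>v. Qform a b c d e f v = 0)) \<and>
          card (C_infty q a b c d e f) = q^2 + 1 \<and>
          (\<exists>L. is_line L \<and> C_infty q a b c d e f \<subseteq> L)"
  proof -
    have "irreducible_qform (Qcoef (1::'a) 1 0 0 0 0)" by (simp add: irred_iff)
    moreover have "is_quadratic_cone (pts (\<lambda>v. Qform (1::'a) 1 0 0 0 0 v = 0))" using cone_ex[of "1::'a" 1] two by simp
    moreover have "card (C_infty q (1::'a) 1 0 0 0 0) = q^2 + 1 \<and> (\<exists>L. is_line L \<and> C_infty q (1::'a) 1 0 0 0 0 \<subseteq> L)"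
      using CC(2)[OF T_E2[OF two]] by blast
    ultimately show ?thesis by blast
  qed
  have E3: "\<exists>a b c d e f :: 'a. irreducible_qform (Qcoef a b c d e f) \<and>
          is_hyperbolic_quadric (pts (\<lambda>v. Qform a b c d e f v = 0)) \<and>
          card (C_infty q a b c d e f) = 1"
  proof (intro exI conjI)
    show "irreducible_qform (Qcoef (0::'a) 0 1 0 0 0)" by (simp add: irred_iff)
    show "is_hyperbolic_quadric (pts (\<lambda>v. Qform (0::'a) 0 1 0 0 0 v = 0))" using hyp_ex[of "1::'a" 1 0 0] by simp
    have "{t::'a. 0*t^2 + 1*t + 0 = 0 \<and> t^(q+1) + 1 = 0} = {}" by simp
    thus "card (C_infty q (0::'a) 0 1 0 0 0) = 1" by (rule CC(1))
  qed
  have E4: "\<exists>a b c d e f :: 'a. irreducible_qform (Qcoef a b c d e f) \<and>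
          is_hyperbolic_quadric (pts (\<lambda>v. Qform a b c d e f v = 0)) \<and>
          card (C_infty q a b c d e f) = q^2 + 1 \<and>
          (\<exists>L. is_line L \<and> C_infty q a b c d e f \<subseteq> L)"
  proof -
    have "irreducible_qform (Qcoef (0::'a) 1 1 0 0 0)" by (simp add: irred_iff)
    moreover have "is_hyperbolic_quadric (pts (\<lambda>v. Qform (0::'a) 1 1 0 0 0 v = 0))" using hyp_ex[of "0::'a" 1 1 1] by simp
    moreover have "card (C_infty q (0::'a) 1 1 0 0 0) = q^2 + 1 \<and> (\<exists>L. is_line L \<and> C_infty q (0::'a) 1 1 0 0 0 \<subseteq> L)"
      using CC(2)[OF T_E4[OF two]] by blast
    ultimately show ?thesis by blast
  qed
  have E5: "\<exists>a b c d e f :: 'a. irreducible_qform (Qcoef a b c d e f) \<and>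
          is_hyperbolic_quadric (pts (\<lambda>v. Qform a b c d e f v = 0)) \<and>
          card (C_infty q a b c d e f) = 2 * q^2 + 1 \<and>
          (\<exists>L1 L2. is_line L1 \<and> is_line L2 \<and> C_infty q a b c d e f \<subseteq> L1 \<union> L2)"
  proof -
    obtain t0 :: 'a where t0: "t0^(q+1) = 1" "t0 \<noteq> 1" using exists_t0[OF fin cardq q2] by blast
    have "irreducible_qform (Qcoef (1::'a) t0 (t0 + 1) 0 0 0)" by (simp add: irred_iff)
    moreover have "is_hyperbolic_quadric (pts (\<lambda>v. Qform (1::'a) t0 (t0 + 1) 0 0 0 v = 0))"
    proof -
      have "1 * t0 - 1 * 1 \<noteq> (0::'a)" using t0(2) by simp
      from hyp_ex[OF this] show ?thesis by (simp add: add.commute)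
    qed
    moreover have "card (C_infty q (1::'a) t0 (t0 + 1) 0 0 0) = 2 * q^2 + 1 \<and>
          (\<exists>L1 L2. is_line L1 \<and> is_line L2 \<and> C_infty q (1::'a) t0 (t0 + 1) 0 0 0 \<subseteq> L1 \<union> L2)"
      using CC(3)[OF T_E5[OF two t0(1)]] t0(2) by simp
    ultimately show ?thesis by blast
  qed
  show ?thesis using U E1 E2 E3 E4 E5 by (intro conjI) assumption+
qed

end
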